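(* Let $\chi:U_1\to\mathbb{Z}/p^2\mathbb{Z}$ be a surjective continuous character of type $\langle l,m\rangle$. Then $\chi$ is strictly equivalent to a character whose standard expansion is $$x_l\,\mathfrak{Z}_l+\sum_{\substack{m-l\le j\le m\\ p\nmid j}} b_j\cdot p\,\mathfrak{Z}_j,$$ where $x_l,b_j\in\{0,1,\dots,p-1\}$, $x_l\neq 0$, and if $p\nmid m$ then $b_m\neq 0$. (A character of this form is called a reduced form of type $\langle l,m\rangle$.) In other words, every strict equivalence class of type $\langle l,m\rangle$ contains a reduced form.
   Context: Let $p$ be a prime, $K=\mathbb{F}_p((t))$, $U_1=1+t\mathbb{F}_p[[t]]$ the group of principal units, and $U_j=1+t^j\mathbb{F}_p[[t]]$ for $j\ge1$; $U_1$ carries the $t$-adic topology. The Nottingham group $\mathcal{N}$ over $\mathbb{F}_p$ is the set of power series $u(t)=t(1+c_1t+c_2t^2+\cdots)$ with $c_i\in\mathbb{F}_p$, a group under composition. A character is a continuous homomorphism $\chi:U_1\to\mathbb{Z}/p^2\mathbb{Z}$ (discrete topology on the target). $\mathcal{N}$ acts on characters by ${}_u\chi(f(t))=\chi(f(u(t)))$ for $f\in U_1$. Two characters $\chi,\psi$ are strictly equivalent, $\chi\simeq\psi$, if there is $u\in\mathcal{N}$ with $\psi={}_u\chi$ and $\chi(u(t)/t)=0$. A surjective character $\chi$ has type (break sequence) $\langle l,m\rangle$ where $l$ is the largest integer $b$ with $\chi(U_b)\not\subset p\mathbb{Z}/p^2\mathbb{Z}$ and $m$ is the largest integer $b$ with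 $\chi(U_b)\neq 0$. Put $E_j=1+t^j$. The elements $E_j$ with $p\nmid j$ form a topological $\mathbb{Z}_p$-basis of $U_1$; for $p\nmid j$, $\mathfrak{Z}_j$ denotes the character with $\mathfrak{Z}_j(E_i)=\delta_{ij}$ for all $i$ with $p\nmid i$. Every character of type $\langle l,m\rangle$ can be written uniquely in standard expansion $\chi=\sum_{1\le i\le l,\,p\nmid i}x_i\mathfrak{Z}_i+\sum_{1\le j\le m,\,p\nmid j}a_j\cdot p\,\mathfrak{Z}_j$ with $x_i,a_j\in\{0,\dots,p-1\}$; here $x_l\ne0$, and $a_m\neq0$ if $p\nmid m$. *)

theory Defs
  imports "HOL-Computational_Algebra.Formal_Power_Series"
begin

(* F_p is modelled by an arbitrary finite field type 'a with CARD('a) = p (p prime);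
   K = F_p((t)) is only needed through its power series ring 'a fps.
   Elements of Z/p^2Z are represented by the integers 0..p^2-1. *)

definition U1 :: "'a::field fps set" where
  "U1 = {f. fps_nth f 0 = 1}"

definition Uj :: "nat \<Rightarrow> 'a::field fps set" where
  "Uj j = {f. fps_nth f 0 = 1 \<and> (\<forall>i. 0 < i \<and> i < j \<longrightarrow> fps_nth f i = 0)}"

definition Ej :: "nat \<Rightarrow> 'a::field fps" where
  "Ej j = 1 + fps_X ^ j"

text \<open>Continuity w.r.t. the t-adic topology on U_1 and the discrete topology on the target
  means local constancy: each f has a t-adic neighbourhood (agreement of the first n
  coefficients) on which the character is constant.\<close>
definition is_character :: "nat \<Rightarrow> ('a::field fps \<Rightarrow> int) \<Rightarrow> bool" where
  "is_character p \<chi> \<longleftrightarrow>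
     (\<forall>f\<in>U1. \<chi> f \<in> {0..<int p ^ 2}) \<and>
     (\<forall>f\<in>U1. \<forall>g\<in>U1. \<chi> (f * g) = (\<chi> f + \<chi> g) mod (int p ^ 2)) \<and>
     (\<forall>f\<in>U1. \<exists>n. \<forall>g\<in>U1. (\<forall>i<n. fps_nth g i = fps_nth f i) \<longrightarrow> \<chi> g = \<chi> f)"

definition surjective_character :: "nat \<Rightarrow> ('a::field fps \<Rightarrow> int) \<Rightarrow> bool" where
  "surjective_character p \<chi> \<longleftrightarrow> is_character p \<chi> \<and> \<chi> ` U1 = {0..<int p ^ 2}"

definition Nottingham :: "'a::field fps set" where
  "Nottingham = {u. fps_nth u 0 = 0 \<and> fps_nth u 1 = 1}"

text \<open>Strict equivalence: psi = _u chi (on U_1) and chi(u(t)/t) = 0; u(t)/t = fps_shift 1 u.\<close>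
definition strictly_equiv :: "('a::field fps \<Rightarrow> int) \<Rightarrow> ('a fps \<Rightarrow> int) \<Rightarrow> bool" where
  "strictly_equiv \<chi> \<psi> \<longleftrightarrow>
     (\<exists>u\<in>Nottingham. (\<forall>f\<in>U1. \<psi> f = \<chi> (fps_compose f u)) \<and> \<chi> (fps_shift 1 u) = 0)"

definition has_type :: "nat \<Rightarrow> ('a::field fps \<Rightarrow> int) \<Rightarrow> nat \<Rightarrow> nat \<Rightarrow> bool" where
  "has_type p \<chi> l m \<longleftrightarrow>
     l \<ge> 1 \<and> (\<exists>f\<in>Uj l. \<not> int p dvd \<chi> f) \<and>
     (\<forall>b>l. \<forall>f\<in>Uj b. int p dvd \<chi> f) \<and>
     m \<ge> 1 \<and> (\<exists>f\<in>Uj m. \<chi> f \<noteq> 0) \<and>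
     (\<forall>b>m. \<forall>f\<in>Uj b. \<chi> f = 0)"

text \<open>Reduced form of type <l,m>: a character whose standard expansion is
  x_l Z_l + sum_{m-l<=j<=m, p not dvd j} b_j p Z_j. Since Z_j is the character with
  Z_j(E_i) = delta_ij (p not dvd i), and the E_i (p not dvd i) form a topological
  Z_p-basis of U_1, this says exactly that psi is a character with
  psi(E_i) = x_l [i=l] + p b_i [m-l<=i<=m] (mod p^2) for all i >= 1 with p not dvd i.\<close>
definition reduced_form :: "nat \<Rightarrow> nat \<Rightarrow> nat \<Rightarrow> ('a::field fps \<Rightarrow> int) \<Rightarrow> bool" where
  "reduced_form p l m \<psi> \<longleftrightarrow> is_character p \<psi> \<and>
     (\<exists>(xl::int) (b::nat \<Rightarrow> int).
        xl \<in> {1..<int p} \<and> (\<forall>j. b j \<in> {0..<int p}) \<and>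
        (\<not> p dvd m \<longrightarrow> b m \<noteq> 0) \<and>
        (\<forall>i. 1 \<le> i \<and> \<not> p dvd i \<longrightarrow>
           \<psi> (Ej i) = ((if i = l then xl else 0)
                       + int p * (if m - l \<le> i \<and> i \<le> m then b i else 0)) mod (int p ^ 2)))"

end

theory Submission
  imports Defs "HOL-Computational_Algebra.Primes" "HOL-Number_Theory.Cong"
begin
unbundle fps_syntax


definition inU :: "nat \<Rightarrow> 'a::field fps \<Rightarrow> bool" where
  "inU k f \<longleftrightarrow> (\<exists>q. f = 1 + fps_X ^ k * q)"

lemma inU_Uj: assumes "k \<ge> 1" shows "f \<in> Uj k \<longleftrightarrow> inU k f"
proof
  assume "f \<in> Uj k"
  hence f0: "f $ 0 = 1" and fi: "\<And>i. 0 < i \<Longrightarrow> i < k \<Longrightarrow> f $ i = 0" by (auto simp: Uj_def)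
  have "f = 1 + fps_X ^ k * fps_shift k (f - 1)"
  proof (rule fps_ext)
    fix n show "f $ n = (1 + fps_X ^ k * fps_shift k (f - 1)) $ n"
      using f0 fi[of n] assms by (cases "n = 0") (auto simp: fps_X_power_mult_nth)
  qed
  thus "inU k f" unfolding inU_def by blast
next
  assume "inU k f"
  then obtain q where q: "f = 1 + fps_X ^ k * q" unfolding inU_def by blast
  show "f \<in> Uj k" unfolding Uj_def using assms by (auto simp: q fps_X_power_mult_nth)
qed

lemma inU_U1: "k \<ge> 1 \<Longrightarrow> inU k f \<Longrightarrow> f \<in> U1"
  by (auto simp: inU_def U1_def fps_X_power_mult_nth)

lemma inU_mono: "k \<le> k' \<Longrightarrow> inU k' f \<Longrightarrow> inU k f"
proof -
  assume "k \<le> k'" "inU k' f"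
  then obtain q where "f = 1 + fps_X ^ k' * q" unfolding inU_def by blast
  also have "fps_X ^ k' = fps_X ^ k * fps_X ^ (k' - k)"
    using \<open>k \<le> k'\<close> by (simp flip: power_add)
  finally show ?thesis unfolding inU_def by (auto simp: mult.assoc)
qed

lemma inU_mult: "inU k f \<Longrightarrow> inU k g \<Longrightarrow> inU k (f * g)"
proof -
  assume "inU k f" "inU k g"
  then obtain q r where "f = 1 + fps_X ^ k * q" "g = 1 + fps_X ^ k * r" unfolding inU_def by blast
  hence "f * g = 1 + fps_X ^ k * (q + r + fps_X ^ k * q * r)" by (simp add: algebra_simps)
  thus ?thesis unfolding inU_def by blast
qed

lemma inU_pow: "inU k f \<Longrightarrow> inU k (f ^ n)"
proof (induction n)
  case 0 show ?case unfolding inU_def by (intro exI[of _ 0]) simp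
next
  case (Suc n) thus ?case by (simp add: inU_mult)
qed

lemma inU_Ej: "inU k (Ej k)"
  unfolding inU_def Ej_def by (intro exI[of _ 1]) simp

lemma fps_X_shift: "(u::'a::field fps) $ 0 = 0 \<Longrightarrow> u = fps_X * fps_shift 1 u"
  by (rule fps_ext) (auto simp: fps_X_mult_nth)

lemma inU_compose: assumes "u $ 0 = 0" "inU k (f::'a::field fps)" shows "inU k (f oo u)"
proof -
  obtain q where q: "f = 1 + fps_X ^ k * q" using assms unfolding inU_def by blast
  have "f oo u = 1 + (fps_X ^ k oo u) * (q oo u)"
    by (simp add: q fps_compose_add_distrib fps_compose_mult_distrib[OF assms(1)])
  also have "fps_X ^ k oo u = u ^ k"
    by (simp add: fps_compose_power[OF assms(1), symmetric] assms(1))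
  also have "u ^ k = fps_X ^ k * fps_shift 1 u ^ k"
    by (subst fps_X_shift[OF assms(1)]) (simp add: power_mult_distrib)
  finally show ?thesis unfolding inU_def by (auto simp: mult.assoc)
qed

lemma pow_lead:
  fixes g q :: "'a::field fps"
  assumes "s \<ge> 1" "g = 1 + fps_X ^ s * q"
  shows "\<exists>q'. g ^ j = 1 + fps_X ^ s * q' \<and> q' $ 0 = of_nat j * q $ 0"
proof (induction j)
  case 0 show ?case by (intro exI[of _ 0]) simp
next
  case (Suc j)
  then obtain r where r: "g ^ j = 1 + fps_X ^ s * r" "r $ 0 = of_nat j * q $ 0" by blast
  have s: "fps_X ^ s = fps_X * fps_X ^ (s - 1)" using assms(1)
    by (metis One_nat_def Suc_pred less_eq_Suc_le power_Suc)
  have "g ^ Suc j = g ^ j * g" by (rule power_Suc2)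
  also have "\<dots> = 1 + fps_X ^ s * (r + q + fps_X ^ s * r * q)"
    unfolding r(1) unfolding assms(2) by (simp add: algebra_simps)
  finally have "g ^ Suc j = 1 + fps_X ^ s * (r + q + fps_X ^ s * r * q)" .
  moreover have "(r + q + fps_X ^ s * r * q) $ 0 = of_nat (Suc j) * q $ 0"
    using r(2) by (simp add: s algebra_simps)
  ultimately show ?case by blast
qed

definition chom :: "nat \<Rightarrow> ('a::field fps \<Rightarrow> int) \<Rightarrow> bool" where
  "chom p \<psi> \<longleftrightarrow> (\<forall>f\<in>U1. \<psi> f \<in> {0..<int p ^ 2}) \<and>
     (\<forall>f\<in>U1. \<forall>g\<in>U1. \<psi> (f * g) = (\<psi> f + \<psi> g) mod (int p ^ 2))"

lemma U1_mult: "f \<in> U1 \<Longrightarrow> g \<in> U1 \<Longrightarrow> f * g \<in> U1"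
  by (simp add: U1_def)

lemma U1_pow: "f \<in> U1 \<Longrightarrow> f ^ n \<in> U1"
  by (induction n) (auto simp: U1_def)

lemma U1_one: "1 \<in> U1" by (simp add: U1_def)

lemma chom_range: "chom p \<psi> \<Longrightarrow> f \<in> U1 \<Longrightarrow> 0 \<le> \<psi> f \<and> \<psi> f < int p ^ 2"
  by (auto simp: chom_def)

lemma chom_mult: "chom p \<psi> \<Longrightarrow> f \<in> U1 \<Longrightarrow> g \<in> U1 \<Longrightarrow> \<psi> (f * g) = (\<psi> f + \<psi> g) mod (int p ^ 2)"
  by (auto simp: chom_def)

lemma chom_one: assumes "chom p \<psi>" shows "\<psi> 1 = 0"
proof -
  have r: "0 \<le> \<psi> 1" "\<psi> 1 < int p ^ 2" using chom_range[OF assms U1_one] by auto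
  have "\<psi> 1 = (\<psi> 1 + \<psi> 1) mod (int p ^ 2)" using chom_mult[OF assms U1_one U1_one] by simp
  hence "\<psi> 1 = (\<psi> 1 + \<psi> 1) - int p ^ 2 \<or> \<psi> 1 = \<psi> 1 + \<psi> 1"
    using r by (smt (verit) mod_pos_pos_trivial minus_mod_self2 mod_pos_pos_trivial)
  thus ?thesis using r by auto
qed

lemma chom_pow: assumes "chom p \<psi>" "f \<in> U1" shows "\<psi> (f ^ n) = (int n * \<psi> f) mod (int p ^ 2)"
proof (induction n)
  case 0 thus ?case using chom_one[OF assms(1)] by simp
next
  case (Suc n)
  have "\<psi> (f ^ Suc n) = (\<psi> f + \<psi> (f ^ n)) mod (int p ^ 2)"
    using chom_mult[OF assms(1) assms(2) U1_pow[OF assms(2)]] by simp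
  also have "\<dots> = (int (Suc n) * \<psi> f) mod (int p ^ 2)"
    unfolding Suc by (simp add: mod_add_right_eq algebra_simps)
  finally show ?case .
qed

lemma U1_compose: "f \<in> U1 \<Longrightarrow> f oo u \<in> U1"
  by (simp add: U1_def)

lemma chom_comp: assumes "chom p \<chi>" "u $ 0 = 0" shows "chom p (\<lambda>f. \<chi> (f oo u))"
  using assms unfolding chom_def
  by (auto simp: fps_compose_mult_distrib[OF assms(2)] U1_compose)

lemma inU_lead_U1: "k \<ge> 1 \<Longrightarrow> 1 + fps_X ^ k * q \<in> U1"
  by (auto simp: U1_def fps_X_power_mult_nth)

lemma chom_diff:
  assumes "chom p \<psi>" "g \<in> U1" "f = g + fps_X ^ k * q" "k \<ge> 1"
  shows "\<psi> f = (\<psi> g + \<psi> (1 + fps_X ^ k * (q * inverse g))) mod (int p ^ 2)"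
proof -
  have g0: "g $ 0 = 1" using assms(2) by (simp add: U1_def)
  have inv: "g * inverse g = 1" by (rule inverse_mult_eq_1') (simp add: g0)
  have "f = g * (1 + fps_X ^ k * (q * inverse g))"
    unfolding assms(3) by (simp add: algebra_simps inv)
  thus ?thesis using chom_mult[OF assms(1) assms(2) inU_lead_U1[OF assms(4)]] by simp
qed

lemma chom_lead:
  fixes h q :: "'a::field fps"
  assumes "chom p \<psi>" "k \<ge> 1" "h = 1 + fps_X ^ k * q" "q $ 0 = of_nat a"
  shows "\<exists>h'. inU (k + 1) h' \<and> \<psi> h = (int a * \<psi> (Ej k) + \<psi> h') mod (int p ^ 2)"
proof -
  have E: "Ej k = 1 + fps_X ^ k * (1::'a fps)" by (simp add: Ej_def)
  obtain q1 :: "'a fps" where q1: "(Ej k :: 'a fps) ^ a = 1 + fps_X ^ k * q1" "q1 $ 0 = of_nat a"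
    using pow_lead[OF assms(2) E, of a] by auto
  define r where "r = fps_shift 1 (q - q1)"
  have "q - q1 = fps_X * r" unfolding r_def by (rule fps_X_shift) (simp add: assms(4) q1(2))
  hence h: "h = Ej k ^ a + fps_X ^ (k + 1) * r"
    unfolding assms(3) using q1(1) by (simp add: algebra_simps)
  have EU: "(Ej k :: 'a fps) \<in> U1" using assms(2) by (simp add: Ej_def U1_def)
  define H where "H = 1 + fps_X ^ (k + 1) * (r * inverse (Ej k ^ a))"
  have "\<psi> h = (\<psi> (Ej k ^ a) + \<psi> H) mod (int p ^ 2)"
    unfolding H_def by (rule chom_diff[OF assms(1) U1_pow[OF EU] h]) simp
  also have "\<dots> = (int a * \<psi> (Ej k) + \<psi> H) mod (int p ^ 2)"
    by (simp add: chom_pow[OF assms(1) EU] mod_add_left_eq)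
  finally show ?thesis using H_def unfolding inU_def by blast
qed

lemma Ej_compose: assumes "v $ 0 = 0" shows "(Ej j :: 'a::field fps) oo v = 1 + v ^ j"
  by (simp add: Ej_def fps_compose_add_distrib fps_compose_power[OF assms, symmetric] assms)

lemma step:
  fixes \<chi> :: "'a::field fps \<Rightarrow> int" and u h :: "'a fps"
  assumes ch: "chom p \<chi>" and u0: "u $ 0 = 0" and u1: "u $ 1 = 1" and us: "\<chi> (fps_shift 1 u) = 0"
    and s1: "s \<ge> 1" and hU: "inU (s + 1) h"
    and hc: "(\<chi> (h oo u) + \<chi> ((Ej s ^ c) oo u)) mod (int p ^ 2) = 0"
  shows "\<exists>u'. u' $ 0 = 0 \<and> u' $ 1 = 1 \<and> \<chi> (fps_shift 1 u') = 0 \<and>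
     (\<forall>j\<ge>1. \<exists>H. inU (j + s + 1) H \<and>
        \<chi> (Ej j oo u') = (\<chi> (Ej j oo u) + int (j * c) * \<chi> (Ej (j + s) oo u) + \<chi> (H oo u)) mod (int p ^ 2))"
proof -
  define \<psi> where "\<psi> = (\<lambda>f. \<chi> (f oo u))"
  have cp: "chom p \<psi>" unfolding \<psi>_def by (rule chom_comp[OF ch u0])
  have E: "Ej s = 1 + fps_X ^ s * (1::'a fps)" by (simp add: Ej_def)
  obtain q1 :: "'a fps" where q1: "(Ej s :: 'a fps) ^ c = 1 + fps_X ^ s * q1" "q1 $ 0 = of_nat c"
    using pow_lead[OF s1 E, of c] by auto
  obtain q2 where q2: "h = 1 + fps_X ^ (s + 1) * q2" using hU unfolding inU_def by blast
  define g where "g = Ej s ^ c * h"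
  define q where "q = q1 + fps_X * q2 + fps_X ^ s * q1 * (fps_X * q2)"
  have gq: "g = 1 + fps_X ^ s * q" unfolding g_def q_def q1(1) q2 by (simp add: algebra_simps)
  have q0: "q $ 0 = of_nat c" unfolding q_def using q1(2) s1 by simp
  have EU: "(Ej s :: 'a fps) \<in> U1" using s1 by (simp add: Ej_def U1_def)
  have hU1: "h \<in> U1" using inU_U1[OF _ hU] by simp
  have gU: "g \<in> U1" unfolding g_def by (intro U1_mult U1_pow EU hU1)
  have g0: "g $ 0 = 1" using gU by (simp add: U1_def)
  have psig: "\<psi> g = 0"
    using chom_mult[OF cp U1_pow[OF EU] hU1, of c] hc unfolding g_def \<psi>_def by (simp add: add.commute)
  define v where "v = fps_X * g"
  have v0: "v $ 0 = 0" unfolding v_def by simp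
  define u' where "u' = v oo u"
  have "u' $ 0 = 0" unfolding u'_def by (simp add: v0)
  moreover have "u' $ 1 = 1"
    using u1 unfolding u'_def by (simp add: fps_compose_nth v_def g0)
  moreover have "\<chi> (fps_shift 1 u') = 0"
  proof -
    have "u' = (fps_X oo u) * (g oo u)" unfolding u'_def v_def by (simp add: fps_compose_mult_distrib[OF u0])
    also have "\<dots> = fps_shift 1 u * (g oo u) * fps_X"
      by (subst fps_X_fps_compose_startby0[OF u0], subst (1) fps_X_shift[OF u0]) (simp add: mult_ac)
    finally have "fps_shift 1 u' = fps_shift 1 u * (g oo u)" by (metis fps_shift_times_fps_X')
    moreover have "fps_shift 1 u \<in> U1" using u1 by (simp add: U1_def)
    ultimately show ?thesis
      using chom_mult[OF ch _ U1_compose[OF gU], of "fps_shift 1 u" u] us psig unfolding \<psi>_def by simp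
  qed
  moreover have "\<exists>H. inU (j + s + 1) H \<and>
        \<chi> (Ej j oo u') = (\<chi> (Ej j oo u) + int (j * c) * \<chi> (Ej (j + s) oo u) + \<chi> (H oo u)) mod (int p ^ 2)"
    if j1: "j \<ge> 1" for j
  proof -
    have comp: "\<chi> (Ej j oo u') = \<psi> (Ej j oo v)"
      unfolding u'_def \<psi>_def by (simp add: fps_compose_assoc[OF u0 v0])
    obtain qj :: "'a fps" where qj: "g ^ j = 1 + fps_X ^ s * qj" "qj $ 0 = of_nat j * of_nat c"
      using pow_lead[OF s1 gq, of j] q0 by auto
    have "Ej j oo v = 1 + (fps_X * g) ^ j" unfolding v_def by (simp add: Ej_compose)
    also have "\<dots> = Ej j + fps_X ^ (j + s) * qj"
      by (simp add: power_mult_distrib qj(1) Ej_def algebra_simps power_add)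
    finally have ev: "Ej j oo v = Ej j + fps_X ^ (j + s) * qj" .
    have EjU: "(Ej j :: 'a fps) \<in> U1" using j1 by (simp add: Ej_def U1_def)
    have d: "\<psi> (Ej j oo v) = (\<psi> (Ej j) + \<psi> (1 + fps_X ^ (j + s) * (qj * inverse (Ej j)))) mod (int p ^ 2)"
      by (rule chom_diff[OF cp EjU ev]) (use j1 in simp)
    have qc: "(qj * inverse (Ej j)) $ 0 = of_nat (j * c)"
      using qj(2) j1 by (simp add: Ej_def)
    have js: "j + s \<ge> 1" using j1 by simp
    from chom_lead[OF cp js refl qc] obtain H where
      H: "inU (j + s + 1) H" "\<psi> (1 + fps_X ^ (j + s) * (qj * inverse (Ej j))) = (int (j * c) * \<psi> (Ej (j + s)) + \<psi> H) mod (int p ^ 2)"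
      by auto
    have "\<chi> (Ej j oo u') = (\<psi> (Ej j) + (int (j * c) * \<psi> (Ej (j + s)) + \<psi> H) mod (int p ^ 2)) mod (int p ^ 2)"
      unfolding comp d H(2) ..
    also have "\<dots> = (\<psi> (Ej j) + int (j * c) * \<psi> (Ej (j + s)) + \<psi> H) mod (int p ^ 2)"
      by (simp add: mod_add_right_eq add.assoc)
    finally show ?thesis using H(1) unfolding \<psi>_def by blast
  qed
  ultimately show ?thesis by blast
qed



lemma of_nat_card_zero: "of_nat (card (UNIV :: 'a::{field,finite} set)) = (0::'a)"
proof -
  have "(\<Sum>x\<in>UNIV. x + 1) = (\<Sum>x\<in>UNIV. (x::'a))"
    by (rule sum.reindex_bij_witness[of _ "\<lambda>x. x - 1" "\<lambda>x. x + 1"]) auto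
  thus ?thesis by (simp add: sum.distrib)
qed

lemma CHAR_card:
  assumes "prime p" "card (UNIV :: 'a::{field,finite} set) = p"
  shows "CHAR('a) = p"
proof -
  have pos: "CHAR('a) > 0" by (rule finite_imp_CHAR_pos) simp
  have pr: "prime CHAR('a)" using prime_CHAR_semidom[OF pos] .
  have "CHAR('a) dvd p" using of_nat_card_zero[where 'a='a] assms(2) by (simp add: of_nat_eq_0_iff_char_dvd)
  thus ?thesis using primes_dvd_imp_eq[OF pr assms(1)] by simp
qed

lemma of_nat_surj:
  assumes "prime p" "card (UNIV :: 'a::{field,finite} set) = p"
  shows "\<exists>a<p. (x::'a) = of_nat a"
proof -
  have C: "CHAR('a) = p" using CHAR_card[OF assms] .
  have inj: "inj_on (of_nat :: nat \<Rightarrow> 'a) {..<p}"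
  proof (rule inj_onI)
    fix a b assume ab: "a \<in> {..<p}" "b \<in> {..<p}" "(of_nat a :: 'a) = of_nat b"
    show "a = b"
    proof (rule ccontr)
      assume "a \<noteq> b"
      hence "a < b \<or> b < a" by auto
      thus False
      proof
        assume "a < b"
        hence "p dvd (b - a)" using ab(3) of_nat_eq_iff_char_dvd[of a b, where 'a='a] C by simp
        moreover have "b - a < p" "0 < b - a" using \<open>a < b\<close> ab(2) by auto
        ultimately show False using dvd_imp_le by fastforce
      next
        assume "b < a"
        hence "p dvd (a - b)" using ab(3) of_nat_eq_iff_char_dvd[of b a, where 'a='a] C by simp
        moreover have "a - b < p" "0 < a - b" using \<open>b < a\<close> ab(1) by auto
        ultimately show False using dvd_imp_le by fastforce
      qed
    qed
  qed
  have "card ((of_nat :: nat \<Rightarrow> 'a) ` {..<p}) = card (UNIV :: 'a set)"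
    using card_image[OF inj] assms(2) by simp
  hence "(of_nat :: nat \<Rightarrow> 'a) ` {..<p} = UNIV"
    by (intro card_subset_eq) auto
  thus ?thesis by (metis UNIV_I imageE lessThan_iff)
qed

lemma Ej_frob:
  assumes "prime p" "card (UNIV :: 'a::{field,finite} set) = p"
  shows "(Ej l :: 'a fps) ^ p = Ej (p * l)"
proof -
  have C: "CHAR('a fps) = p" using CHAR_card[OF assms] by simp
  have "(1 + fps_X ^ l :: 'a fps) ^ p = 1 ^ p + (fps_X ^ l) ^ p"
    by (rule freshmans_dream) (use C assms(1) in auto)
  thus ?thesis by (simp add: Ej_def power_mult[symmetric] mult.commute)
qed

lemma solve_mod:
  fixes a b M :: int
  assumes "coprime a M" "M > 0"
  shows "\<exists>n::nat. (int n * a + b) mod M = 0"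
proof -
  obtain x where x: "[a * x = 1] (mod M)" using cong_solve_coprime_int[OF assms(1)] by blast
  define n where "n = nat ((- b * x) mod M)"
  have nn: "int n = (- b * x) mod M" unfolding n_def using assms(2) by simp
  have "[int n * a + b = (- b * x) * a + b] (mod M)"
    unfolding nn by (intro cong_add cong_mult cong_refl) (simp add: cong_def)
  also have "[(- b * x) * a + b = - b * (a * x) + b] (mod M)" by (simp add: algebra_simps cong_refl)
  also have "[- b * (a * x) + b = - b * 1 + b] (mod M)"
    by (intro cong_add cong_mult cong_refl x)
  finally show ?thesis by (intro exI[of _ n]) (simp add: cong_def)
qed



locale setting =
  fixes p :: nat and \<chi> :: "'a::field fps \<Rightarrow> int" and l m :: nat
  assumes pr: "prime p" and ch: "chom p \<chi>" and l1: "l \<ge> 1" and lm: "l < m"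
    and LU: "\<And>k f. l + 1 \<le> k \<Longrightarrow> inU k f \<Longrightarrow> int p dvd \<chi> f"
    and MU: "\<And>k f. m + 1 \<le> k \<Longrightarrow> inU k f \<Longrightarrow> \<chi> f = 0"
    and EL: "\<not> int p dvd \<chi> (Ej l)"
    and EM: "\<chi> (Ej m) \<noteq> 0"
begin

definition strict :: "'a fps \<Rightarrow> bool" where
  "strict u \<longleftrightarrow> u $ 0 = 0 \<and> u $ 1 = 1 \<and> \<chi> (fps_shift 1 u) = 0"

definition V :: "'a fps \<Rightarrow> nat \<Rightarrow> int" where
  "V u j = \<chi> (Ej j oo u)"

lemma p2: "p \<ge> 2" using pr by (simp add: prime_ge_2_nat)

lemma Ppos: "int p ^ 2 > 0" using p2 by simp

lemma pdvdP: "int p dvd int p ^ 2" by simp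

lemma LUu: "u $ 0 = 0 \<Longrightarrow> l + 1 \<le> k \<Longrightarrow> inU k f \<Longrightarrow> int p dvd \<chi> (f oo u)"
  using LU inU_compose by blast

lemma MUu: "u $ 0 = 0 \<Longrightarrow> m + 1 \<le> k \<Longrightarrow> inU k f \<Longrightarrow> \<chi> (f oo u) = 0"
  using MU inU_compose by blast

lemma EjU1: "j \<ge> 1 \<Longrightarrow> (Ej j :: 'a fps) \<in> U1"
  by (simp add: Ej_def U1_def)

lemma Vrange: "j \<ge> 1 \<Longrightarrow> 0 \<le> V u j \<and> V u j < int p ^ 2"
  unfolding V_def using chom_range[OF ch U1_compose[OF EjU1]] by blast

lemma Ej_comp_lead:
  assumes u0: "u $ 0 = 0" and u1: "u $ 1 = 1" and k1: "k \<ge> 1"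
  shows "\<exists>h'. inU (k + 1) h' \<and> V u k = (\<chi> (Ej k) + \<chi> h') mod (int p ^ 2)"
proof -
  define S where "S = fps_shift 1 u"
  have S0: "S $ 0 = 1" using u1 unfolding S_def by simp
  have "Ej k oo u = 1 + u ^ k" by (rule Ej_compose[OF u0])
  also have "u ^ k = fps_X ^ k * S ^ k"
    unfolding S_def by (subst fps_X_shift[OF u0]) (simp add: power_mult_distrib)
  finally have e: "Ej k oo u = 1 + fps_X ^ k * S ^ k" .
  have "(S ^ k) $ 0 = of_nat 1" using S0 by (simp add: fps_nth_power_0)
  from chom_lead[OF ch k1 e this] show ?thesis unfolding V_def by simp
qed

lemma ELu: assumes "u $ 0 = 0" "u $ 1 = 1" shows "\<not> int p dvd V u l"
proof
  assume d: "int p dvd V u l"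
  obtain h' where h': "inU (l + 1) h'" "V u l = (\<chi> (Ej l) + \<chi> h') mod (int p ^ 2)"
    using Ej_comp_lead[OF assms l1] by blast
  have "int p dvd \<chi> h'" using LU[OF _ h'(1)] by simp
  moreover have "int p dvd \<chi> (Ej l) + \<chi> h'" using d h'(2) dvd_mod_iff[OF pdvdP] by metis
  ultimately show False using EL by (simp add: dvd_add_left_iff)
qed

lemma EMu: assumes "u $ 0 = 0" "u $ 1 = 1" shows "V u m = \<chi> (Ej m)"
proof -
  obtain h' where h': "inU (m + 1) h'" "V u m = (\<chi> (Ej m) + \<chi> h') mod (int p ^ 2)"
    using Ej_comp_lead[OF assms, of m] lm by auto
  have "\<chi> h' = 0" using MU[OF _ h'(1)] by simp
  moreover have "0 \<le> \<chi> (Ej m)" "\<chi> (Ej m) < int p ^ 2" using chom_range[OF ch EjU1] lm by auto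
  ultimately show ?thesis using h'(2) by simp
qed

lemma VmP: "u $ 0 = 0 \<Longrightarrow> int p dvd V u m"
  unfolding V_def using LUu[OF _ _ inU_Ej] lm by simp

lemma Vpow: assumes "u $ 0 = 0" "j \<ge> 1"
  shows "\<chi> ((Ej j ^ n) oo u) = (int n * V u j) mod (int p ^ 2)"
proof -
  have "(Ej j ^ n) oo u = (Ej j oo u) ^ n" by (simp add: fps_compose_power[OF assms(1)])
  thus ?thesis unfolding V_def using chom_pow[OF ch U1_compose[OF EjU1[OF assms(2)]]] by simp
qed

lemma strict_X: "strict fps_X"
proof -
  have "fps_shift 1 (fps_X :: 'a fps) = 1" using fps_shift_times_fps_X'[of "1::'a fps"] by simp
  thus ?thesis unfolding strict_def using chom_one[OF ch] by simp
qed

lemma coprime_p: "\<not> int p dvd a \<Longrightarrow> coprime a (int p)"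
  using prime_imp_coprime[of "int p" a] pr by (simp add: coprime_commute)

lemma step':
  assumes "strict u" "s \<ge> 1" "inU (s + 1) h" "(\<chi> (h oo u) + \<chi> ((Ej s ^ c) oo u)) mod (int p ^ 2) = 0"
  shows "\<exists>u'. strict u' \<and> (\<forall>j\<ge>1. \<exists>H. inU (j + s + 1) H \<and>
        V u' j = (V u j + int (j * c) * V u (j + s) + \<chi> (H oo u)) mod (int p ^ 2))"
  using step[OF ch _ _ _ assms(2,3,4)] assms(1) unfolding strict_def V_def by blast

lemma phase1: "d \<le> l - 1 \<Longrightarrow> \<exists>u. strict u \<and> (\<forall>j. l - d \<le> j \<and> j < l \<and> \<not> p dvd j \<longrightarrow> int p dvd V u j)"
proof (induction d)
  case 0 show ?case using strict_X by auto
next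
  case (Suc d)
  then obtain u where u: "strict u" and IH: "\<And>j. l - d \<le> j \<Longrightarrow> j < l \<Longrightarrow> \<not> p dvd j \<Longrightarrow> int p dvd V u j"
    by auto
  have u0: "u $ 0 = 0" and u1: "u $ 1 = 1" using u by (auto simp: strict_def)
  define i where "i = l - Suc d"
  have i1: "i \<ge> 1" "i < l" using Suc.prems unfolding i_def by auto
  show ?case
  proof (cases "p dvd i")
    case True
    have "\<forall>j. l - Suc d \<le> j \<and> j < l \<and> \<not> p dvd j \<longrightarrow> int p dvd V u j"
    proof (intro allI impI)
      fix j assume j: "l - Suc d \<le> j \<and> j < l \<and> \<not> p dvd j"
      hence "j \<noteq> i" using True by auto
      hence "l - d \<le> j" using j i_def by auto
      thus "int p dvd V u j" using IH j by auto
    qed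
    thus ?thesis using u by blast
  next
    case False
    define s where "s = Suc d"
    have s1: "s \<ge> 1" and isl: "i + s = l" using i1 Suc.prems unfolding s_def i_def by auto
    have ndi: "\<not> int p dvd int i" using False by simp
    have ndV: "\<not> int p dvd V u l" using ELu[OF u0 u1] .
    have "\<not> int p dvd int i * V u l" using ndi ndV pr by (simp add: prime_dvd_mult_iff)
    then obtain c where c: "(int c * (int i * V u l) + V u i) mod int p = 0"
      using solve_mod[OF coprime_p] p2 by fastforce
    define w where "w = \<chi> ((Ej s ^ c) oo u)"
    have cpV: "coprime (V u l) (int p ^ 2)" using coprime_p[OF ndV] by simp
    have "\<exists>n::nat. (int n * V u l + w) mod (int p ^ 2) = 0" by (rule solve_mod[OF cpV Ppos])
    then obtain n :: nat where n: "(int n * V u l + w) mod (int p ^ 2) = 0" by (elim exE)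
    define h where "h = (Ej l :: 'a fps) ^ n"
    have hU: "inU (s + 1) h" unfolding h_def
      by (intro inU_pow inU_mono[OF _ inU_Ej]) (use isl i1 in auto)
    have hc: "(\<chi> (h oo u) + \<chi> ((Ej s ^ c) oo u)) mod (int p ^ 2) = 0"
      unfolding h_def Vpow[OF u0 l1] using n unfolding w_def by (simp add: mod_add_left_eq)
    obtain u' where u': "strict u'" and
      st: "\<And>j. j \<ge> 1 \<Longrightarrow> \<exists>H. inU (j + s + 1) H \<and>
        V u' j = (V u j + int (j * c) * V u (j + s) + \<chi> (H oo u)) mod (int p ^ 2)"
      using step'[OF u s1 hU hc] by blast
    have "\<forall>j. l - Suc d \<le> j \<and> j < l \<and> \<not> p dvd j \<longrightarrow> int p dvd V u' j"
    proof (intro allI impI)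
      fix j assume j: "l - Suc d \<le> j \<and> j < l \<and> \<not> p dvd j"
      have j1: "j \<ge> 1" using j i1 i_def by auto
      obtain H where H: "inU (j + s + 1) H"
        "V u' j = (V u j + int (j * c) * V u (j + s) + \<chi> (H oo u)) mod (int p ^ 2)"
        using st[OF j1] by blast
      have dH: "int p dvd \<chi> (H oo u)" using LUu[OF u0 _ H(1)] j isl i_def by auto
      have "int p dvd V u j + int (j * c) * V u (j + s)"
      proof (cases "j = i")
        case True
        have "int p dvd int c * (int i * V u l) + V u i" using c by (simp add: dvd_eq_mod_eq_0)
        thus ?thesis using True isl by (simp add: algebra_simps)
      next
        case False
        hence "l - d \<le> j" using j i_def by auto
        hence "int p dvd V u j" using IH j by auto
        moreover have "int p dvd V u (j + s)" unfolding V_def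
          using LUu[OF u0 _ inU_Ej] \<open>l - d \<le> j\<close> s_def j by auto
        ultimately show ?thesis by simp
      qed
      hence "int p dvd V u j + int (j * c) * V u (j + s) + \<chi> (H oo u)" using dH by simp
      thus "int p dvd V u' j" unfolding H(2) using dvd_mod_iff[OF pdvdP] by blast
    qed
    thus ?thesis using u' by blast
  qed
qed

lemma phase2: "d \<le> m - l - 1 \<Longrightarrow> \<exists>u. strict u \<and>
   (\<forall>j. 1 \<le> j \<and> j < l \<and> \<not> p dvd j \<longrightarrow> int p dvd V u j) \<and>
   (\<forall>j. m - l - d \<le> j \<and> j < m - l \<and> \<not> p dvd j \<longrightarrow> V u j < int p)"
proof (induction d)
  case 0
  obtain u where "strict u" "\<forall>j. l - (l - 1) \<le> j \<and> j < l \<and> \<not> p dvd j \<longrightarrow> int p dvd V u j"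
    using phase1[of "l - 1"] by auto
  thus ?case using l1 by auto
next
  case (Suc d)
  then obtain u where u: "strict u" and IH1: "\<And>j. 1 \<le> j \<Longrightarrow> j < l \<Longrightarrow> \<not> p dvd j \<Longrightarrow> int p dvd V u j"
    and IH2: "\<And>j. m - l - d \<le> j \<Longrightarrow> j < m - l \<Longrightarrow> \<not> p dvd j \<Longrightarrow> V u j < int p"
    by auto
  have u0: "u $ 0 = 0" and u1: "u $ 1 = 1" using u by (auto simp: strict_def)
  define i where "i = m - l - Suc d"
  have i1: "i \<ge> 1" "i < m - l" using Suc.prems unfolding i_def by auto
  show ?case
  proof (cases "p dvd i")
    case True
    have "\<forall>j. m - l - Suc d \<le> j \<and> j < m - l \<and> \<not> p dvd j \<longrightarrow> V u j < int p"
    proof (intro allI impI)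
      fix j assume j: "m - l - Suc d \<le> j \<and> j < m - l \<and> \<not> p dvd j"
      hence "j \<noteq> i" using True by auto
      hence "m - l - d \<le> j" using j i_def by auto
      thus "V u j < int p" using IH2 j by auto
    qed
    thus ?thesis using u IH1 by blast
  next
    case False
    define s where "s = m - i"
    have s1: "s \<ge> l + 1" and ism: "i + s = m" and sm: "s + 1 \<le> m" using i1 lm unfolding s_def by auto
    have ndi: "\<not> int p dvd int i" using False by simp
    define z where "z = V u m div int p"
    have Vm: "V u m = int p * z" unfolding z_def using VmP[OF u0] by simp
    have Vm0: "V u m \<noteq> 0" using EMu[OF u0 u1] EM by simp
    have Vmr: "0 \<le> V u m" "V u m < int p ^ 2" using Vrange lm by auto
    have ndz: "\<not> int p dvd z"
    proof
      assume "int p dvd z"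
      then obtain z' where "z = int p * z'" by blast
      hence "V u m = int p ^ 2 * z'" using Vm by (simp add: power2_eq_square)
      thus False using Vm0 Vmr by (smt (verit) mult_le_cancel_left1 zero_less_mult_pos)
    qed
    define y where "y = V u i div int p"
    have "\<not> int p dvd int i * z" using ndi ndz pr by (simp add: prime_dvd_mult_iff)
    have cp1: "coprime (int i * z) (int p)" using coprime_p[OF \<open>\<not> int p dvd int i * z\<close>] .
    have "\<exists>c::nat. (int c * (int i * z) + y) mod int p = 0" using p2 by (intro solve_mod[OF cp1]) simp
    then obtain c :: nat where c: "(int c * (int i * z) + y) mod int p = 0" by (elim exE)
    define w where "w = \<chi> ((Ej s ^ c) oo u)"
    have "int p dvd w" unfolding w_def by (rule LUu[OF u0 _ inU_pow[OF inU_Ej]]) (use s1 in simp)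
    then obtain w' where w': "w = int p * w'" by blast
    have cp2: "coprime z (int p)" using coprime_p[OF ndz] .
    have "\<exists>n::nat. (int n * z + w') mod int p = 0" using p2 by (intro solve_mod[OF cp2]) simp
    then obtain n :: nat where n: "(int n * z + w') mod int p = 0" by (elim exE)
    define h where "h = (Ej m :: 'a fps) ^ n"
    have hU: "inU (s + 1) h" unfolding h_def
      by (intro inU_pow inU_mono[OF _ inU_Ej]) (use sm in auto)
    have hc: "(\<chi> (h oo u) + \<chi> ((Ej s ^ c) oo u)) mod (int p ^ 2) = 0"
    proof -
      have m1: "m \<ge> 1" using l1 lm by simp
      have "(\<chi> (h oo u) + \<chi> ((Ej s ^ c) oo u)) mod (int p ^ 2) = (int n * V u m + w) mod (int p ^ 2)"
        unfolding h_def Vpow[OF u0 m1] w_def by (simp add: mod_add_left_eq)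
      also have "int n * V u m + w = int p * (int n * z + w')" unfolding Vm w' by (simp add: algebra_simps)
      also have "(int p * (int n * z + w')) mod (int p ^ 2) = 0"
        using n by (auto simp: power2_eq_square dvd_eq_mod_eq_0[symmetric])
      finally show ?thesis .
    qed
    have sge: "s \<ge> 1" using s1 by simp
    obtain u' where u': "strict u'" and
      st: "\<And>j. j \<ge> 1 \<Longrightarrow> \<exists>H. inU (j + s + 1) H \<and>
        V u' j = (V u j + int (j * c) * V u (j + s) + \<chi> (H oo u)) mod (int p ^ 2)"
      using step'[OF u sge hU hc] by blast
    have A: "\<forall>j. 1 \<le> j \<and> j < l \<and> \<not> p dvd j \<longrightarrow> int p dvd V u' j"
    proof (intro allI impI)
      fix j assume j: "1 \<le> j \<and> j < l \<and> \<not> p dvd j"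
      obtain H where H: "inU (j + s + 1) H"
        "V u' j = (V u j + int (j * c) * V u (j + s) + \<chi> (H oo u)) mod (int p ^ 2)"
        using st j by blast
      have "int p dvd \<chi> (H oo u)" using LUu[OF u0 _ H(1)] s1 by auto
      moreover have "int p dvd V u (j + s)" unfolding V_def using LUu[OF u0 _ inU_Ej] s1 by auto
      moreover have "int p dvd V u j" using IH1 j by auto
      ultimately have "int p dvd V u j + int (j * c) * V u (j + s) + \<chi> (H oo u)" by simp
      thus "int p dvd V u' j" unfolding H(2) using dvd_mod_iff[OF pdvdP] by blast
    qed
    have B: "\<forall>j. m - l - Suc d \<le> j \<and> j < m - l \<and> \<not> p dvd j \<longrightarrow> V u' j < int p"
    proof (intro allI impI)
      fix j assume j: "m - l - Suc d \<le> j \<and> j < m - l \<and> \<not> p dvd j"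
      have j1: "j \<ge> 1" using j i1 i_def by auto
      obtain H where H: "inU (j + s + 1) H"
        "V u' j = (V u j + int (j * c) * V u (j + s) + \<chi> (H oo u)) mod (int p ^ 2)"
        using st j1 by blast
      have H0: "\<chi> (H oo u) = 0" using MUu[OF u0 _ H(1)] j ism i_def by auto
      show "V u' j < int p"
      proof (cases "j = i")
        case True
        have Vi: "V u i = V u i mod int p + int p * y" unfolding y_def by simp
        have "int p dvd int c * (int i * z) + y" using c by (simp add: dvd_eq_mod_eq_0)
        then obtain t where t: "int c * (int i * z) + y = int p * t" by blast
        have Vi': "V u i - V u i mod int p = int p * y" by (simp add: y_def minus_mod_eq_mult_div)
        have tp: "int p * (int c * (int i * z)) + int p * y = int p * int p * t"
          using arg_cong[OF t, of "\<lambda>x. int p * x"] by (simp add: algebra_simps)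
        have "V u j + int (j * c) * V u (j + s) + \<chi> (H oo u) = V u i + int p * (int c * (int i * z))"
          using True ism H0 Vm by (simp add: algebra_simps)
        also have "\<dots> = V u i mod int p + int p ^ 2 * t"
          using Vi' tp by (simp add: power2_eq_square)
        finally have "V u j + int (j * c) * V u (j + s) + \<chi> (H oo u) = V u i mod int p + int p ^ 2 * t" .
        hence "V u' j = (V u i mod int p) mod (int p ^ 2)" unfolding H(2) by simp
        also have "\<dots> = V u i mod int p"
        proof -
          have r: "0 \<le> V u i mod int p" "V u i mod int p < int p" using p2 by auto
          have "int p \<le> int p ^ 2" using p2 by (simp add: power2_eq_square)
          thus ?thesis using r by (intro mod_pos_pos_trivial) linarith+
        qed
        finally show ?thesis using p2 by simp
      next
        case False
        hence jd: "m - l - d \<le> j" using j i_def by auto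
        have "V u (j + s) = 0" unfolding V_def using MUu[OF u0 _ inU_Ej] jd ism i_def False j by auto
        hence "V u' j = V u j mod (int p ^ 2)" using H(2) H0 by simp
        also have "\<dots> = V u j" using Vrange[OF j1] by simp
        finally show ?thesis using IH2 jd j by auto
      qed
    qed
    show ?thesis using u' A B by blast
  qed
qed

lemma final: "\<exists>u. strict u \<and>
   (\<forall>j. 1 \<le> j \<and> j < l \<and> \<not> p dvd j \<longrightarrow> int p dvd V u j) \<and>
   (\<forall>j. 1 \<le> j \<and> j < m - l \<and> \<not> p dvd j \<longrightarrow> V u j < int p)"
proof -
  have "m - l - (m - l - 1) = 1" using lm by simp
  thus ?thesis using phase2[of "m - l - 1"] by auto
qed

lemma reduced_ok:
  assumes u: "strict u"
    and A: "\<forall>j. 1 \<le> j \<and> j < l \<and> \<not> p dvd j \<longrightarrow> int p dvd V u j"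
    and B: "\<forall>j. 1 \<le> j \<and> j < m - l \<and> \<not> p dvd j \<longrightarrow> V u j < int p"
  shows "\<exists>(xl::int) (b::nat \<Rightarrow> int).
        xl \<in> {1..<int p} \<and> (\<forall>j. b j \<in> {0..<int p}) \<and>
        (\<not> p dvd m \<longrightarrow> b m \<noteq> 0) \<and>
        (\<forall>i. 1 \<le> i \<and> \<not> p dvd i \<longrightarrow>
           V u i = ((if i = l then xl else 0)
                       + int p * (if m - l \<le> i \<and> i \<le> m then b i else 0)) mod (int p ^ 2))"
proof -
  have u0: "u $ 0 = 0" and u1: "u $ 1 = 1" using u by (auto simp: strict_def)
  define xl where "xl = V u l mod int p"
  define b where "b = (\<lambda>j. (V u j div int p) mod int p)"
  have pp: "int p > 0" using p2 by simp
  have xl: "xl \<in> {1..<int p}"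
  proof -
    have "V u l mod int p \<noteq> 0" using ELu[OF u0 u1] by (simp add: dvd_eq_mod_eq_0)
    moreover have "0 \<le> V u l mod int p" "V u l mod int p < int p" using pp by auto
    ultimately show ?thesis unfolding xl_def by simp
  qed
  have bj: "\<forall>j. b j \<in> {0..<int p}" unfolding b_def using pp by auto
  have divlt: "V u j div int p < int p" if "j \<ge> 1" for j
  proof (rule ccontr)
    assume "\<not> V u j div int p < int p"
    hence "int p * int p \<le> int p * (V u j div int p)" using pp by (intro mult_left_mono) auto
    moreover have "V u j = int p * (V u j div int p) + V u j mod int p" by simp
    moreover have "0 \<le> V u j mod int p" using pp by simp
    moreover have "V u j < int p * int p" using Vrange[OF that, of u] by (simp add: power2_eq_square)
    ultimately show False by linarith
  qed
  have divge: "0 \<le> V u j div int p" if "j \<ge> 1" for j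
    using Vrange[OF that, of u] pp by (simp add: pos_imp_zdiv_nonneg_iff)
  have bdiv: "b j = V u j div int p" if "j \<ge> 1" for j
    unfolding b_def using divlt[OF that] divge[OF that] by simp
  have m1: "m \<ge> 1" using l1 lm by simp
  have bm: "\<not> p dvd m \<longrightarrow> b m \<noteq> 0"
  proof
    have "V u m \<noteq> 0" using EMu[OF u0 u1] EM by simp
    moreover have "int p dvd V u m" using VmP[OF u0] .
    ultimately have "V u m div int p \<noteq> 0" by auto
    thus "b m \<noteq> 0" using bdiv[OF m1] by simp
  qed
  have main: "V u i = ((if i = l then xl else 0)
                 + int p * (if m - l \<le> i \<and> i \<le> m then b i else 0)) mod (int p ^ 2)"
    if i: "1 \<le> i" "\<not> p dvd i" for i
  proof -
    have rng: "0 \<le> V u i" "V u i < int p ^ 2" using Vrange[OF i(1)] by auto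
    have pdv: "int p dvd V u i" if "i \<noteq> l" 
    proof (cases "i < l")
      case True thus ?thesis using A i by auto
    next
      case False
      hence "l + 1 \<le> i" using that by simp
      thus ?thesis unfolding V_def using LUu[OF u0 _ inU_Ej] by auto
    qed
    consider (big) "m < i" | (mid) "m - l \<le> i" "i \<le> m" | (small) "i < m - l" by linarith
    thus ?thesis
    proof cases
      case big
      have "V u i = 0" unfolding V_def using MUu[OF u0 _ inU_Ej] big by auto
      thus ?thesis using big lm by auto
    next
      case mid
      have e: "int p * b i = int p * (V u i div int p)" using bdiv[OF i(1)] by simp
      show ?thesis
      proof (cases "i = l")
        case True
        have "xl + int p * b i = V u i" unfolding e xl_def using True by simp
        thus ?thesis using mid True rng by simp
      next
        case False
        have "int p * b i = V u i" unfolding e using pdv[OF False] by simp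
        thus ?thesis using mid False rng by simp
      qed
    next
      case small
      have lt: "V u i < int p" using B small i by auto
      show ?thesis
      proof (cases "i = l")
        case True
        have "xl = V u i" unfolding xl_def using True lt rng by simp
        thus ?thesis using small True rng by simp
      next
        case False
        have "V u i = 0" using pdv[OF False] lt rng by (metis zdvd_not_zless order_le_less)
        thus ?thesis using small False by simp
      qed
    qed
  qed
  show ?thesis using xl bj bm main by blast
qed

end



theorem theorem1p1:
  fixes p :: nat and \<chi> :: "'a::{field,finite} fps \<Rightarrow> int" and l m :: nat
  assumes "prime p" and "card (UNIV :: 'a set) = p"
    and "surjective_character p \<chi>"
    and "has_type p \<chi> l m"
  shows "\<exists>\<psi>. strictly_equiv \<chi> \<psi> \<and> reduced_form p l m \<psi>"
proof -
  have isc: "is_character p \<chi>" using assms(3) by (simp add: surjective_character_def)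
  have ch: "chom p \<chi>" using isc unfolding is_character_def chom_def by blast
  have cont: "\<And>f. f \<in> U1 \<Longrightarrow> \<exists>n. \<forall>g\<in>U1. (\<forall>i<n. g $ i = f $ i) \<longrightarrow> \<chi> g = \<chi> f"
    using isc unfolding is_character_def by blast
  have p2: "p \<ge> 2" using assms(1) by (simp add: prime_ge_2_nat)
  have pdvdP: "int p dvd int p ^ 2" by simp
  note ht = assms(4)[unfolded has_type_def]
  have l1: "l \<ge> 1" and m1: "m \<ge> 1" using ht by auto
  obtain fl where fl: "fl \<in> Uj l" "\<not> int p dvd \<chi> fl" using ht by blast
  obtain fm where fm: "fm \<in> Uj m" "\<chi> fm \<noteq> 0" using ht by blast
  have LU: "\<And>k (f::'a fps). l + 1 \<le> k \<Longrightarrow> inU k f \<Longrightarrow> int p dvd \<chi> f"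
  proof -
    fix k and f :: "'a fps" assume "l + 1 \<le> k" "inU k f"
    hence "f \<in> Uj k" using inU_Uj[of k f] by auto
    have "\<forall>b>l. \<forall>f\<in>(Uj b :: 'a fps set). int p dvd \<chi> f" using ht by blast
    moreover have "l < k" using \<open>l + 1 \<le> k\<close> by simp
    ultimately show "int p dvd \<chi> f" using \<open>f \<in> Uj k\<close> by blast
  qed
  have MU: "\<And>k (f::'a fps). m + 1 \<le> k \<Longrightarrow> inU k f \<Longrightarrow> \<chi> f = 0"
  proof -
    fix k and f :: "'a fps" assume "m + 1 \<le> k" "inU k f"
    hence "f \<in> Uj k" using inU_Uj[of k f] by auto
    have "\<forall>b>m. \<forall>f\<in>(Uj b :: 'a fps set). \<chi> f = 0" using ht by blast
    moreover have "m < k" using \<open>m + 1 \<le> k\<close> by simp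
    ultimately show "\<chi> f = 0" using \<open>f \<in> Uj k\<close> by blast
  qed
  have lead: "\<exists>a h'. inU (k + 1) h' \<and> \<chi> f = (int a * \<chi> (Ej k) + \<chi> h') mod (int p ^ 2)"
    if fk: "f \<in> Uj k" "k \<ge> 1" for f :: "'a fps" and k
  proof -
    obtain q where q: "f = 1 + fps_X ^ k * q" using inU_Uj[OF fk(2)] fk(1) unfolding inU_def by blast
    obtain a where "a < p" "q $ 0 = of_nat a" using of_nat_surj[OF assms(1,2)] by blast
    from chom_lead[OF ch fk(2) q this(2)] show ?thesis by blast
  qed
  have EL: "\<not> int p dvd \<chi> (Ej l)"
  proof
    assume d: "int p dvd \<chi> (Ej l)"
    obtain a h' where h': "inU (l + 1) h'" "\<chi> fl = (int a * \<chi> (Ej l) + \<chi> h') mod (int p ^ 2)"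
      using lead[OF fl(1) l1] by blast
    have "int p dvd int a * \<chi> (Ej l) + \<chi> h'" using d LU[OF _ h'(1)] by simp
    hence "int p dvd \<chi> fl" unfolding h'(2) using dvd_mod_iff[OF pdvdP] by blast
    thus False using fl(2) by simp
  qed
  have EM: "\<chi> (Ej m) \<noteq> 0"
  proof
    assume d: "\<chi> (Ej m) = 0"
    obtain a h' where h': "inU (m + 1) h'" "\<chi> fm = (int a * \<chi> (Ej m) + \<chi> h') mod (int p ^ 2)"
      using lead[OF fm(1) m1] by blast
    thus False using d MU[OF _ h'(1)] fm(2) by simp
  qed
  have "l \<le> m"
  proof (rule ccontr)
    assume "\<not> l \<le> m"
    moreover have "\<forall>b>m. \<forall>f\<in>(Uj b :: 'a fps set). \<chi> f = 0" using ht by blast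
    moreover have "m < l" using \<open>\<not> l \<le> m\<close> by simp
    ultimately have "\<chi> fl = 0" using fl(1) by blast
    thus False using fl(2) by simp
  qed
  moreover have "l \<noteq> m"
  proof
    assume lm: "l = m"
    have "2 * l \<le> p * l" by (rule mult_le_mono1[OF p2])
    hence pl: "m + 1 \<le> p * l" using lm l1 by linarith
    have "\<chi> (Ej (p * l) :: 'a fps) = 0" by (rule MU[OF pl inU_Ej])
    hence "\<chi> (Ej l ^ p) = 0" using Ej_frob[OF assms(1,2), of l] by simp
    moreover have "\<chi> (Ej l ^ p) = (int p * \<chi> (Ej l)) mod (int p ^ 2)"
      using chom_pow[OF ch] l1 by (simp add: Ej_def U1_def)
    ultimately have "int p * int p dvd int p * \<chi> (Ej l)" by (simp add: dvd_eq_mod_eq_0 power2_eq_square)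
    hence "int p dvd \<chi> (Ej l)" using p2 by simp
    thus False using EL by simp
  qed
  ultimately have lm: "l < m" by simp
  interpret S: setting p \<chi> l m
    by unfold_locales (use assms(1) ch l1 lm LU MU EL EM in auto)
  obtain u where u: "S.strict u"
    and A: "\<forall>j. 1 \<le> j \<and> j < l \<and> \<not> p dvd j \<longrightarrow> int p dvd S.V u j"
    and B: "\<forall>j. 1 \<le> j \<and> j < m - l \<and> \<not> p dvd j \<longrightarrow> S.V u j < int p"
    using S.final by blast
  have u0: "u $ 0 = 0" and u1: "u $ 1 = 1" and us: "\<chi> (fps_shift 1 u) = 0"
    using u by (auto simp: S.strict_def)
  define \<psi> where "\<psi> = (\<lambda>f. \<chi> (f oo u))"
  have se: "strictly_equiv \<chi> \<psi>"
    unfolding strictly_equiv_def Nottingham_def \<psi>_def using u0 u1 us by auto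
  have cp: "chom p \<psi>" unfolding \<psi>_def by (rule chom_comp[OF ch u0])
  have cont\<psi>: "\<exists>n. \<forall>g\<in>U1. (\<forall>i<n. g $ i = f $ i) \<longrightarrow> \<psi> g = \<psi> f" if f: "f \<in> U1" for f
  proof -
    obtain n where n: "\<forall>g\<in>U1. (\<forall>i<n. g $ i = (f oo u) $ i) \<longrightarrow> \<chi> g = \<chi> (f oo u)"
      using cont[OF U1_compose[OF f]] by blast
    have "\<psi> g = \<psi> f" if g: "g \<in> U1" "\<forall>i<n. g $ i = f $ i" for g
    proof -
      have "(g oo u) $ i = (f oo u) $ i" if "i < n" for i
        unfolding fps_compose_nth using g(2) that by (intro sum.cong) auto
      thus ?thesis unfolding \<psi>_def using n U1_compose[OF g(1)] by blast
    qed
    thus ?thesis by blast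
  qed
  have isc\<psi>: "is_character p \<psi>"
    using cp cont\<psi> unfolding is_character_def chom_def by blast
  have "reduced_form p l m \<psi>"
    unfolding reduced_form_def using isc\<psi> S.reduced_ok[OF u A B] unfolding S.V_def \<psi>_def by blast
  thus ?thesis using se by blast
qed

end
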